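(* Let $\mathcal{S}$ be a state space, $\mathcal{A}$ a finite action space, $\rho$ a distribution on $\mathcal{S}$, and $r^*:\mathcal{S}\times\mathcal{A}\to\mathbb{R}$ a reward with Bradley–Terry preference model $\mathbb{P}_{r^*}(y=1|s,a,a')=\sigma(r^*(s,a)-r^*(s,a'))$, $\sigma(x)=1/(1+e^{-x})$. Then for any policies $\pi,\tilde\pi$ and any $s\in\mathcal{S}$, $$1-\mathbb{TV}(\pi(\cdot|s)\|\tilde\pi(\cdot|s))\le\min_{\gamma>0}\sqrt{\big(\gamma+2\mathbb{P}_{r^*}(\pi(\cdot|s)\succ\tilde\pi(\cdot|s))\big)\log\frac{1+\gamma}{\gamma}},$$ and $$1-\mathbb{E}_{s\sim\rho}\big[\mathbb{TV}(\pi(\cdot|s)\|\tilde\pi(\cdot|s))\big]\le\min_{\gamma>0}\sqrt{\big(\gamma+2\mathbb{P}_{r^*}(\pi\succ\tilde\pi)\big)\log\frac{1+\gamma}{\gamma}}.$$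
   Context: $\mathbb{TV}(p\|q)=\frac12\sum_a|p(a)-q(a)|$. $\mathbb{P}_{r^*}(\pi(\cdot|s)\succ\tilde\pi(\cdot|s)):=\mathbb{E}_{a\sim\pi(\cdot|s),a'\sim\tilde\pi(\cdot|s)}[\mathbb{P}_{r^*}(y=1|s,a,a')]$ and $\mathbb{P}_{r^*}(\pi\succ\tilde\pi):=\mathbb{E}_{s\sim\rho,a\sim\pi(\cdot|s),a'\sim\tilde\pi(\cdot|s)}[\mathbb{P}_{r^*}(y=1|s,a,a')]$. *)

theory Defs
  imports "HOL-Probability.Probability"
begin

definition sigmoid :: "real \<Rightarrow> real" where
  "sigmoid x = 1 / (1 + exp (- x))"

definition is_policy :: "('s \<Rightarrow> 'a::finite \<Rightarrow> real) \<Rightarrow> bool" where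
  "is_policy \<pi> \<longleftrightarrow> (\<forall>s a. 0 \<le> \<pi> s a) \<and> (\<forall>s. (\<Sum>a\<in>UNIV. \<pi> s a) = 1)"

definition TV :: "('a::finite \<Rightarrow> real) \<Rightarrow> ('a \<Rightarrow> real) \<Rightarrow> real" where
  "TV p q = (1/2) * (\<Sum>a\<in>UNIV. \<bar>p a - q a\<bar>)"

definition BT_pref :: "('s \<Rightarrow> 'a \<Rightarrow> real) \<Rightarrow> 's \<Rightarrow> 'a \<Rightarrow> 'a \<Rightarrow> real" where
  "BT_pref r s a a' = sigmoid (r s a - r s a')"

definition pref_state :: "('s \<Rightarrow> 'a::finite \<Rightarrow> real) \<Rightarrow> ('s \<Rightarrow> 'a \<Rightarrow> real) \<Rightarrow> ('s \<Rightarrow> 'a \<Rightarrow> real) \<Rightarrow> 's \<Rightarrow> real" where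
  "pref_state r \<pi> \<pi>' s = (\<Sum>a\<in>UNIV. \<Sum>a'\<in>UNIV. \<pi> s a * \<pi>' s a' * BT_pref r s a a')"

definition pref :: "'s measure \<Rightarrow> ('s \<Rightarrow> 'a::finite \<Rightarrow> real) \<Rightarrow> ('s \<Rightarrow> 'a \<Rightarrow> real) \<Rightarrow> ('s \<Rightarrow> 'a \<Rightarrow> real) \<Rightarrow> real" where
  "pref \<rho> r \<pi> \<pi>' = (\<integral>s. pref_state r \<pi> \<pi>' s \<partial>\<rho>)"

end

theory Submission
  imports Defs
begin

lemma sigmoid_sym: "sigmoid x + sigmoid (- x) = 1"
proof -
  have "exp x > 0" by simp
  hence ne: "1 + exp x \<noteq> 0" by linarith
  hence "1 / (1 + exp x) + exp x / (1 + exp x) = 1"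
    using ne by (simp add: add_divide_distrib[symmetric] add.commute)
  thus ?thesis by (simp add: sigmoid_def exp_minus field_simps)
qed

lemma sigmoid_nonneg: "0 \<le> sigmoid x"
  by (simp add: sigmoid_def add_pos_pos)

lemma sigmoid_le1: "sigmoid x \<le> 1"
  using sigmoid_sym[of x] sigmoid_nonneg[of "-x"] by linarith

lemma one_minus_TV:
  fixes p q :: "'a::finite \<Rightarrow> real"
  assumes "sum p UNIV = 1" "sum q UNIV = 1"
  shows "1 - TV p q = (\<Sum>a\<in>UNIV. min (p a) (q a))"
proof -
  have "\<And>a. min (p a) (q a) = (p a + q a - \<bar>p a - q a\<bar>) / 2" by auto
  hence "(\<Sum>a\<in>UNIV. min (p a) (q a)) = (\<Sum>a\<in>UNIV. (p a + q a - \<bar>p a - q a\<bar>) / 2)"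
    by (intro sum.cong) (simp_all only:)
  also have "\<dots> = (sum p UNIV + sum q UNIV - (\<Sum>a\<in>UNIV. \<bar>p a - q a\<bar>)) / 2"
    by (simp add: sum_divide_distrib[symmetric] sum_subtractf sum.distrib)
  finally show ?thesis using assms by (simp add: TV_def)
qed

lemma key_sq:
  fixes p q m :: "'a::finite \<Rightarrow> real" and d :: "'a \<Rightarrow> 'a \<Rightarrow> real"
  assumes "\<And>a. 0 \<le> p a" "\<And>a. 0 \<le> q a"
    and "\<And>a b. 0 \<le> d a b" "\<And>a b. d a b + d b a = 1"
  shows "(\<Sum>a\<in>UNIV. min (p a) (q a))^2 \<le> 2 * (\<Sum>a\<in>UNIV. \<Sum>b\<in>UNIV. p a * q b * d a b)"
proof -
  define m where "m a = min (p a) (q a)" for a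
  have m0: "0 \<le> m a" for a using assms by (simp add: m_def)
  have le: "(\<Sum>a\<in>UNIV. \<Sum>b\<in>UNIV. m a * m b * d a b) \<le> (\<Sum>a\<in>UNIV. \<Sum>b\<in>UNIV. p a * q b * d a b)"
  proof (intro sum_mono)
    fix a b
    have "m a * m b \<le> p a * q b"
      by (intro mult_mono) (auto simp: m_def assms)
    thus "m a * m b * d a b \<le> p a * q b * d a b"
      using assms(3) by (simp add: mult_right_mono)
  qed
  have sw: "(\<Sum>a\<in>UNIV. \<Sum>b\<in>UNIV. m a * m b * d a b) = (\<Sum>a\<in>UNIV. \<Sum>b\<in>UNIV. m a * m b * d b a)"
    by (subst sum.swap) (simp add: mult.commute mult.left_commute)
  have "2 * (\<Sum>a\<in>UNIV. \<Sum>b\<in>UNIV. m a * m b * d a b)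
      = (\<Sum>a\<in>UNIV. \<Sum>b\<in>UNIV. m a * m b * (d a b + d b a))"
    using sw by (simp add: distrib_left sum.distrib)
  also have "\<dots> = (\<Sum>a\<in>UNIV. \<Sum>b\<in>UNIV. m a * m b)" by (simp add: assms(4))
  also have "\<dots> = (sum m UNIV)^2" by (simp add: power2_eq_square sum_product)
  finally show ?thesis using le by (simp add: m_def)
qed

lemma ln_bound:
  fixes \<gamma> :: real assumes "\<gamma> > 0"
  shows "1 / (1 + \<gamma>) \<le> ln ((1 + \<gamma>) / \<gamma>)"
proof -
  have "ln (\<gamma> / (1 + \<gamma>)) \<le> \<gamma> / (1 + \<gamma>) - 1"
    using assms by (intro ln_le_minus_one) auto
  moreover have "ln (\<gamma> / (1 + \<gamma>)) = - ln ((1 + \<gamma>) / \<gamma>)"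
    using assms by (simp add: ln_div)
  moreover have "\<gamma> / (1 + \<gamma>) - 1 = - (1 / (1 + \<gamma>))"
    using assms by (simp add: field_simps)
  ultimately show ?thesis by linarith
qed

lemma real_bound:
  fixes X t \<gamma> :: real
  assumes "0 \<le> X" "X \<le> 1" "X^2 \<le> t" "\<gamma> > 0"
  shows "X^2 \<le> (\<gamma> + t) * ln ((1 + \<gamma>) / \<gamma>)"
proof -
  have X1: "X^2 \<le> 1" using assms by (simp add: power_le_one)
  have t0: "0 \<le> t" using assms(3) by (metis order_trans zero_le_power2)
  have "X^2 \<le> (\<gamma> + t) / (1 + \<gamma>)"
  proof (cases "t \<le> 1")
    case True
    have "t * (1 + \<gamma>) \<le> \<gamma> + t" using True assms(4) by (simp add: algebra_simps)
    hence "t \<le> (\<gamma> + t) / (1 + \<gamma>)" using assms(4) by (simp add: field_simps)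
    thus ?thesis using assms(3) by linarith
  next
    case False
    hence "1 \<le> (\<gamma> + t) / (1 + \<gamma>)" using assms(4) by (simp add: field_simps)
    thus ?thesis using X1 by linarith
  qed
  also have "\<dots> = (\<gamma> + t) * (1 / (1 + \<gamma>))" by simp
  also have "\<dots> \<le> (\<gamma> + t) * ln ((1 + \<gamma>) / \<gamma>)"
    using ln_bound[OF assms(4)] t0 assms(4) by (intro mult_left_mono) auto
  finally show ?thesis .
qed

theorem lemmaG2:
  fixes \<rho> :: "'s measure"
    and r :: "'s \<Rightarrow> 'a::finite \<Rightarrow> real"
    and \<pi> \<pi>' :: "'s \<Rightarrow> 'a \<Rightarrow> real"
  assumes "prob_space \<rho>"
    and "\<And>a. (\<lambda>s. r s a) \<in> borel_measurable \<rho>"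
    and "is_policy \<pi>" and "is_policy \<pi>'"
    and "\<And>a. (\<lambda>s. \<pi> s a) \<in> borel_measurable \<rho>"
    and "\<And>a. (\<lambda>s. \<pi>' s a) \<in> borel_measurable \<rho>"
  shows "(\<forall>s. \<forall>\<gamma>>0. 1 - TV (\<pi> s) (\<pi>' s)
            \<le> sqrt ((\<gamma> + 2 * pref_state r \<pi> \<pi>' s) * ln ((1 + \<gamma>) / \<gamma>)))
       \<and> (\<forall>\<gamma>>0. 1 - (\<integral>s. TV (\<pi> s) (\<pi>' s) \<partial>\<rho>)
            \<le> sqrt ((\<gamma> + 2 * pref \<rho> r \<pi> \<pi>') * ln ((1 + \<gamma>) / \<gamma>)))"
proof -
  interpret P: prob_space \<rho> by fact
  have p0: "\<And>s a. 0 \<le> \<pi> s a" and p1: "\<And>s. sum (\<pi> s) UNIV = 1"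
    using assms(3) by (auto simp: is_policy_def)
  have q0: "\<And>s a. 0 \<le> \<pi>' s a" and q1: "\<And>s. sum (\<pi>' s) UNIV = 1"
    using assms(4) by (auto simp: is_policy_def)
  define X where "X s = 1 - TV (\<pi> s) (\<pi>' s)" for s
  define T where "T s = 2 * pref_state r \<pi> \<pi>' s" for s
  have Xeq: "X s = (\<Sum>a\<in>UNIV. min (\<pi> s a) (\<pi>' s a))" for s
    unfolding X_def by (rule one_minus_TV[OF p1 q1])
  have X0: "0 \<le> X s" for s unfolding Xeq using p0 q0 by (intro sum_nonneg) auto
  have X1: "X s \<le> 1" for s
  proof -
    have "X s \<le> sum (\<pi> s) UNIV" unfolding Xeq by (intro sum_mono) auto
    thus ?thesis using p1 by simp
  qed
  have XT: "(X s)^2 \<le> T s" for s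
    unfolding Xeq T_def pref_state_def BT_pref_def
    using key_sq[of "\<pi> s" "\<pi>' s" "\<lambda>a b. sigmoid (r s a - r s b)"] p0 q0
    by (simp add: sigmoid_nonneg sigmoid_sym[of "r s _ - r s _", simplified])
  have T0: "0 \<le> T s" for s using XT[of s] by (metis order_trans zero_le_power2)
  have pT1: "pref_state r \<pi> \<pi>' s \<le> 1" for s
  proof -
    have "pref_state r \<pi> \<pi>' s \<le> (\<Sum>a\<in>UNIV. \<Sum>b\<in>UNIV. \<pi> s a * \<pi>' s b)"
      unfolding pref_state_def BT_pref_def
      by (intro sum_mono) (simp add: p0 q0 sigmoid_le1 mult_left_le)
    also have "\<dots> = 1" by (simp add: sum_product[symmetric] p1 q1)
    finally show ?thesis .
  qed
  have pw: "(X s)^2 \<le> (\<gamma> + T s) * ln ((1 + \<gamma>) / \<gamma>)" if "\<gamma> > 0" for s \<gamma>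
    using real_bound[OF X0 X1 XT that] .
  have part1: "\<forall>s. \<forall>\<gamma>>0. 1 - TV (\<pi> s) (\<pi>' s)
            \<le> sqrt ((\<gamma> + 2 * pref_state r \<pi> \<pi>' s) * ln ((1 + \<gamma>) / \<gamma>))"
    using pw by (auto simp: X_def T_def intro: real_le_rsqrt)
  have mTV: "(\<lambda>s. TV (\<pi> s) (\<pi>' s)) \<in> borel_measurable \<rho>"
    unfolding TV_def using assms(5,6) by measurable
  have mP: "(\<lambda>s. pref_state r \<pi> \<pi>' s) \<in> borel_measurable \<rho>"
    unfolding pref_state_def BT_pref_def sigmoid_def using assms(2,5,6) by measurable
  have mX: "X \<in> borel_measurable \<rho>" unfolding X_def using mTV by measurable
  have iTV: "integrable \<rho> (\<lambda>s. TV (\<pi> s) (\<pi>' s))"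
  proof (rule P.integrable_const_bound[where B=1])
    show "AE x in \<rho>. norm (TV (\<pi> x) (\<pi>' x)) \<le> 1"
      using X0 X1 by (auto simp: X_def)
  qed (rule mTV)
  have iP: "integrable \<rho> (\<lambda>s. pref_state r \<pi> \<pi>' s)"
  proof (rule P.integrable_const_bound[where B=1])
    show "AE x in \<rho>. norm (pref_state r \<pi> \<pi>' x) \<le> 1"
      using T0 pT1 by (auto simp: T_def)
  qed (rule mP)
  have iX: "integrable \<rho> X"
    by (rule P.integrable_const_bound[where B=1]) (use X0 X1 mX in auto)
  have iX2: "integrable \<rho> (\<lambda>s. (X s)^2)"
    by (rule P.integrable_const_bound[where B=1]) (use X0 X1 mX in \<open>auto simp: power_le_one\<close>)
  have EX: "(\<integral>s. X s \<partial>\<rho>) = 1 - (\<integral>s. TV (\<pi> s) (\<pi>' s) \<partial>\<rho>)"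
    unfolding X_def using iTV by (simp add: P.prob_space)
  show ?thesis
  proof (intro conjI part1 allI impI)
    fix \<gamma> :: real assume g: "\<gamma> > 0"
    define L where "L = ln ((1 + \<gamma>) / \<gamma>)"
    have L0: "L > 0" unfolding L_def using g by (simp add: ln_gt_zero)
    define Z where "Z = (\<gamma> + 2 * pref \<rho> r \<pi> \<pi>') * L"
    have Ep0: "0 \<le> pref \<rho> r \<pi> \<pi>'"
      unfolding pref_def using T0 by (intro integral_nonneg_AE) (auto simp: T_def)
    have Z0: "Z > 0" unfolding Z_def using g Ep0 L0 by simp
    define c where "c = sqrt Z"
    have c0: "c > 0" using Z0 by (simp add: c_def)
    have cc: "c * c = Z" using Z0 by (simp add: c_def)
    have EX2: "(\<integral>s. (X s)^2 \<partial>\<rho>) \<le> Z"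
    proof -
      have "(\<integral>s. (X s)^2 \<partial>\<rho>) \<le> (\<integral>s. (\<gamma> + 2 * pref_state r \<pi> \<pi>' s) * L \<partial>\<rho>)"
        using pw[OF g] iX2 iP by (intro integral_mono) (auto simp: T_def L_def)
      also have "\<dots> = Z" using iP
        by (simp add: Z_def pref_def P.prob_space algebra_simps)
      finally show ?thesis .
    qed
    have am: "X s \<le> ((X s)^2 / c + c) / 2" for s
    proof -
      have "0 \<le> (X s - c)^2" by simp
      hence "2 * X s * c \<le> (X s)^2 + c * c" by (simp add: power2_eq_square algebra_simps)
      thus ?thesis using c0 by (simp add: field_simps power2_eq_square)
    qed
    have "(\<integral>s. X s \<partial>\<rho>) \<le> (\<integral>s. ((X s)^2 / c + c) / 2 \<partial>\<rho>)"
      using am iX iX2 by (intro integral_mono) auto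
    also have "\<dots> = ((\<integral>s. (X s)^2 \<partial>\<rho>) / c + c) / 2"
      using iX2 by (simp add: P.prob_space)
    also have "\<dots> \<le> (Z / c + c) / 2"
      using EX2 c0 by (simp add: divide_right_mono)
    also have "\<dots> = c" using cc c0 by (simp add: field_simps)
    finally show "1 - (\<integral>s. TV (\<pi> s) (\<pi>' s) \<partial>\<rho>) \<le> sqrt ((\<gamma> + 2 * pref \<rho> r \<pi> \<pi>') * ln ((1 + \<gamma>) / \<gamma>))"
      using EX by (simp add: c_def Z_def L_def)
  qed
qed

end
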